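(* Every $2$-regular bipartite graph is a mirror bipartite graph.
   Context: A bipartite graph $G=(V_1\cup V_2,E)$ with stable sets $V_1,V_2$ is mirror if there is a bijection $\varphi:V_1\to V_2$ such that for all $u,v\in V_1$, $u\varphi(v)\in E$ if and only if $\varphi(u)v\in E$. *)

theory Defs
  imports Main
begin

text \<open>A simple graph is given by a symmetric adjacency relation E. It is a (finite)
bipartite graph with stable sets V1, V2 if V1, V2 are disjoint finite sets, E is
symmetric, and every edge joins a vertex of V1 to a vertex of V2 (so the vertex set
is V1 \<union> V2, both sides are stable, and E is irreflexive).\<close>

definition bipartite_graph :: "'a set \<Rightarrow> 'a set \<Rightarrow> ('a \<Rightarrow> 'a \<Rightarrow> bool) \<Rightarrow> bool" where
  "bipartite_graph V1 V2 E \<longleftrightarrow>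
     finite V1 \<and> finite V2 \<and> V1 \<inter> V2 = {} \<and>
     (\<forall>u v. E u v \<longrightarrow> E v u) \<and>
     (\<forall>u v. E u v \<longrightarrow> (u \<in> V1 \<and> v \<in> V2) \<or> (u \<in> V2 \<and> v \<in> V1))"

definition regular_graph :: "'a set \<Rightarrow> ('a \<Rightarrow> 'a \<Rightarrow> bool) \<Rightarrow> nat \<Rightarrow> bool" where
  "regular_graph V E k \<longleftrightarrow> (\<forall>u\<in>V. card {v. E u v} = k)"

definition mirror :: "'a set \<Rightarrow> 'a set \<Rightarrow> ('a \<Rightarrow> 'a \<Rightarrow> bool) \<Rightarrow> bool" where
  "mirror V1 V2 E \<longleftrightarrow>
     (\<exists>\<phi>. bij_betw \<phi> V1 V2 \<and> (\<forall>u\<in>V1. \<forall>v\<in>V1. E u (\<phi> v) \<longleftrightarrow> E (\<phi> u) v))"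

end

theory Submission
  imports Defs
begin

definition good :: "'a set \<Rightarrow> 'a set \<Rightarrow> ('a \<Rightarrow> 'a \<Rightarrow> bool) \<Rightarrow> ('a \<Rightarrow> 'a) \<Rightarrow> bool" where
  "good V1 V2 E r \<longleftrightarrow> (\<forall>x\<in>V1. r x \<in> V2) \<and> (\<forall>x\<in>V2. r x \<in> V1) \<and>
     (\<forall>x\<in>V1\<union>V2. r (r x) = x) \<and> (\<forall>x\<in>V1\<union>V2. \<forall>y\<in>V1\<union>V2. E x y \<longleftrightarrow> E (r x) (r y))"

lemma nbr2:
  assumes "regular_graph V E 2" "x \<in> V" "E x y"
  shows "\<exists>z. z \<noteq> y \<and> (\<forall>v. E x v \<longleftrightarrow> v = y \<or> v = z)"
proof -
  have "card {v. E x v} = 2" using assms unfolding regular_graph_def by auto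
  then obtain p q where pq: "{v. E x v} = {p,q}" "p \<noteq> q" by (auto simp: card_2_iff)
  have "y = p \<or> y = q" using pq assms(3) by blast
  then show ?thesis
  proof
    assume "y = p" then show ?thesis using pq by (intro exI[of _ q]) blast
  next
    assume "y = q" then show ?thesis using pq by (intro exI[of _ p]) blast
  qed
qed

lemma exists_good:
  assumes "\<And>x y. x \<in> V1 \<Longrightarrow> E x y \<Longrightarrow> \<exists>r. good V1 V2 E r \<and> r x = y"
    and bip: "bipartite_graph V1 V2 E" and reg: "regular_graph (V1\<union>V2) E 2"
  shows "\<exists>r. good V1 V2 E r"
proof (cases "V1 = {}")
  case True
  have "V2 = {}"
  proof (rule ccontr)
    assume "V2 \<noteq> {}"
    then obtain v where v: "v \<in> V2" by auto
    have "card {w. E v w} = 2" using reg v unfolding regular_graph_def by auto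
    then obtain p q where "{w. E v w} = {p,q}" by (auto simp: card_2_iff)
    then have "E v p" by auto
    then show False using bip True v unfolding bipartite_graph_def by auto
  qed
  then show ?thesis using True unfolding good_def by auto
next
  case False
  then obtain x where x: "x \<in> V1" by auto
  have "card {w. E x w} = 2" using reg x unfolding regular_graph_def by auto
  then obtain p q where "{w. E x w} = {p,q}" by (auto simp: card_2_iff)
  then have "E x p" by auto
  then show ?thesis using assms(1)[OF x] by blast
qed

lemma good_swap: "good V1 V2 E r \<Longrightarrow> good V2 V1 E r"
  unfolding good_def by blast

lemma bip_swap: "bipartite_graph V1 V2 E \<Longrightarrow> bipartite_graph V2 V1 E"
  unfolding bipartite_graph_def by blast

lemma main:
  assumes "bipartite_graph V1 V2 E" "regular_graph (V1\<union>V2) E 2" "u \<in> V1" "E u a"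
  shows "\<exists>r. good V1 V2 E r \<and> r u = a"
  using assms
proof (induction "card V1" arbitrary: V1 V2 E u a rule: less_induct)
  case less
  note bip = less.prems(1) and reg = less.prems(2) and u = less.prems(3) and ua = less.prems(4)
  have fin: "finite V1" "finite V2" and disj: "V1 \<inter> V2 = {}" and sym: "\<And>x y. E x y \<Longrightarrow> E y x"
    and sides: "\<And>x y. E x y \<Longrightarrow> (x \<in> V1 \<and> y \<in> V2) \<or> (x \<in> V2 \<and> y \<in> V1)"
    using bip unfolding bipartite_graph_def by auto
  have a: "a \<in> V2" using sides[OF ua] u disj by auto
  obtain b where b: "b \<noteq> a" "\<And>v. E u v \<longleftrightarrow> v = a \<or> v = b"
    using nbr2[OF reg _ ua] u by auto
  have au: "E a u" using sym ua .
  obtain c where c: "c \<noteq> u" "\<And>v. E a v \<longleftrightarrow> v = u \<or> v = c"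
    using nbr2[OF reg _ au] a by auto
  have bV: "b \<in> V2" using sides[of u b] b u disj by auto
  have cV: "c \<in> V1" using sides[of a c] c a disj by auto
  have bu: "E b u" using sym b by auto
  have ca: "E c a" using sym c by auto
  show ?case
  proof (cases "E b c")
    case True
    obtain d where d: "d \<noteq> u" "\<And>v. E b v \<longleftrightarrow> v = u \<or> v = d"
      using nbr2[OF reg _ bu] bV by auto
    have bn: "\<And>v. E b v \<longleftrightarrow> v = u \<or> v = c" using d(2)[of c] d(2) True c(1) by auto
    obtain e where e: "e \<noteq> a" "\<And>v. E c v \<longleftrightarrow> v = a \<or> v = e"
      using nbr2[OF reg _ ca] cV by auto
    have cn: "\<And>v. E c v \<longleftrightarrow> v = a \<or> v = b" using e(2)[of b] e(2) sym[OF True] b(1) by auto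
    define S where "S = {u,c,a,b}"
    define E' where "E' = (\<lambda>x y. E x y \<and> x \<notin> S \<and> y \<notin> S)"
    have bip': "bipartite_graph (V1 - {u,c}) (V2 - {a,b}) E'"
      using bip unfolding bipartite_graph_def E'_def S_def by auto
    have nb: "{v. E' w v} = {v. E w v}" if "w \<in> (V1 - {u,c}) \<union> (V2 - {a,b})" for w
    proof -
      have "w \<notin> S" using that disj u a bV cV unfolding S_def by auto
      moreover have "E w v \<Longrightarrow> v \<notin> S" for v
        using \<open>w \<notin> S\<close> b c bn cn sym unfolding S_def by blast
      ultimately show ?thesis unfolding E'_def by auto
    qed
    have reg': "regular_graph ((V1 - {u,c}) \<union> (V2 - {a,b})) E' 2"
      using reg nb unfolding regular_graph_def by auto
    have lt: "card (V1 - {u,c}) < card V1"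
      using u fin by (intro psubset_card_mono) auto
    obtain r' where r': "good (V1 - {u,c}) (V2 - {a,b}) E' r'"
      using exists_good[OF _ bip' reg'] less.hyps[OF lt bip' reg'] by blast
    define r where "r = r'(u:=a, a:=u, c:=b, b:=c)"
    have "u \<noteq> c" using c by auto
    have "u \<noteq> b" "a \<noteq> c" "u \<noteq> a" "b \<noteq> c" using u a bV cV disj by auto
    have gg: "(\<forall>x\<in>V1 - {u,c}. r' x \<in> V2 - {a,b}) \<and> (\<forall>x\<in>V2 - {a,b}. r' x \<in> V1 - {u,c}) \<and>
      (\<forall>x\<in>(V1 - {u,c}) \<union> (V2 - {a,b}). r' (r' x) = x) \<and>
      (\<forall>x\<in>(V1 - {u,c}) \<union> (V2 - {a,b}). \<forall>y\<in>(V1 - {u,c}) \<union> (V2 - {a,b}). E' x y \<longleftrightarrow> E' (r' x) (r' y))"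
      using r' unfolding good_def by (elim conjE) (intro conjI)
    note g1 = gg[THEN conjunct1] and g2 = gg[THEN conjunct2, THEN conjunct1]
      and g3 = gg[THEN conjunct2, THEN conjunct2, THEN conjunct1]
    have out: "r' x \<in> V1 \<union> V2 \<and> r' x \<notin> S \<and> r' (r' x) = x" if "x \<in> V1 \<union> V2" "x \<notin> S" for x
    proof -
      have "x \<in> V1 - {u,c} \<or> x \<in> V2 - {a,b}" using that unfolding S_def by auto
      then show ?thesis
      proof
        assume h: "x \<in> V1 - {u,c}"
        then have "r' x \<in> V2 - {a,b}" "r' (r' x) = x" using g1 g3 by auto
        then show ?thesis using disj u cV unfolding S_def by auto
      next
        assume h: "x \<in> V2 - {a,b}"
        then have "r' x \<in> V1 - {u,c}" "r' (r' x) = x" using g2 g3 by auto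
        then show ?thesis using disj a bV unfolding S_def by auto
      qed
    qed
    have side: "(x \<in> V1 \<longrightarrow> r' x \<in> V2) \<and> (x \<in> V2 \<longrightarrow> r' x \<in> V1)" if "x \<in> V1 \<union> V2" "x \<notin> S" for x
      using g1 g2 that unfolding S_def by auto
    have rr: "r x = r' x" if "x \<notin> S" for x using that unfolding r_def S_def by auto
    have rS: "r x \<in> S \<and> r (r x) = x" if "x \<in> S" for x
      using that \<open>u \<noteq> c\<close> \<open>u \<noteq> b\<close> \<open>a \<noteq> c\<close> \<open>b \<noteq> c\<close> \<open>u \<noteq> a\<close> b(1)
      unfolding r_def S_def by auto
    have nS: "\<not> E x y \<and> \<not> E y x" if "x \<in> S" "y \<notin> S" for x y
      using that b c bn cn sym unfolding S_def by blast
    have "good V1 V2 E r"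
      unfolding good_def
    proof (intro conjI ballI)
      fix x assume x: "x \<in> V1" then show "r x \<in> V2"
        using side[of x] rr[of x] a bV \<open>u \<noteq> c\<close> \<open>u \<noteq> b\<close> \<open>a \<noteq> c\<close> \<open>b \<noteq> c\<close> \<open>u \<noteq> a\<close> b(1) disj
        unfolding r_def S_def by (cases "x \<in> S") (auto simp: S_def)
    next
      fix x assume "x \<in> V2" then show "r x \<in> V1"
        using side[of x] rr[of x] u cV \<open>u \<noteq> c\<close> \<open>u \<noteq> b\<close> \<open>a \<noteq> c\<close> \<open>b \<noteq> c\<close> \<open>u \<noteq> a\<close> b(1) disj
        unfolding r_def S_def by (cases "x \<in> S") (auto simp: S_def)
    next
      fix x assume "x \<in> V1 \<union> V2" then show "r (r x) = x"
        using out[of x] rr rS[of x] by (cases "x \<in> S") auto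
    next
      fix x y assume x: "x \<in> V1 \<union> V2" and y: "y \<in> V1 \<union> V2"
      show "E x y \<longleftrightarrow> E (r x) (r y)"
      proof (cases "x \<in> S"; cases "y \<in> S")
        assume "x \<in> S" "y \<in> S"
        have vals: "r u = a" "r a = u" "r c = b" "r b = c"
          using \<open>u \<noteq> c\<close> \<open>u \<noteq> b\<close> \<open>a \<noteq> c\<close> \<open>b \<noteq> c\<close> \<open>u \<noteq> a\<close> b(1) unfolding r_def by auto
        have ne: "u \<noteq> c" "u \<noteq> b" "a \<noteq> c" "b \<noteq> c" "u \<noteq> a" "b \<noteq> a"
          "c \<noteq> u" "b \<noteq> u" "c \<noteq> a" "c \<noteq> b" "a \<noteq> u" "a \<noteq> b"
          using \<open>u \<noteq> c\<close> \<open>u \<noteq> b\<close> \<open>a \<noteq> c\<close> \<open>b \<noteq> c\<close> \<open>u \<noteq> a\<close> b(1) by auto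
        from \<open>x \<in> S\<close> \<open>y \<in> S\<close> have "x = u \<or> x = c \<or> x = a \<or> x = b" "y = u \<or> y = c \<or> y = a \<or> y = b"
          unfolding S_def by auto
        then show ?thesis
          by (elim disjE) (simp_all only: vals b(2) c(2) bn cn ne simp_thms)
      next
        assume xs: "x \<in> S" and ys: "y \<notin> S"
        have "r x \<in> S" "r y \<notin> S" using rS[OF xs] out[OF y ys] rr[OF ys] by auto
        then show ?thesis using nS xs ys by blast
      next
        assume xs: "x \<notin> S" and ys: "y \<in> S"
        have "r y \<in> S" "r x \<notin> S" using rS[OF ys] out[OF x xs] rr[OF xs] by auto
        then show ?thesis using nS xs ys by blast
      next
        assume xs: "x \<notin> S" and ys: "y \<notin> S"
        have x': "x \<in> (V1 - {u,c}) \<union> (V2 - {a,b})" and y': "y \<in> (V1 - {u,c}) \<union> (V2 - {a,b})"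
          using x y xs ys unfolding S_def by auto
        have "E' x y \<longleftrightarrow> E' (r' x) (r' y)" using gg[THEN conjunct2, THEN conjunct2, THEN conjunct2] x' y' by blast
        then show ?thesis using out[OF x xs] out[OF y ys] xs ys rr unfolding E'_def by auto
      qed
    qed
    moreover have "r u = a" unfolding r_def using \<open>u \<noteq> b\<close> \<open>u \<noteq> c\<close> \<open>u \<noteq> a\<close> by simp
    ultimately show ?thesis by blast
  next
    case False
    obtain d where d: "d \<noteq> u" "\<And>v. E b v \<longleftrightarrow> v = u \<or> v = d"
      using nbr2[OF reg _ bu] bV by auto
    have dV: "d \<in> V1" using sides[of b d] d bV disj by auto
    have "d \<noteq> c" using d False by auto
    obtain e where e: "e \<noteq> a" "\<And>v. E c v \<longleftrightarrow> v = a \<or> v = e"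
      using nbr2[OF reg _ ca] cV by auto
    have eV: "e \<in> V2" using sides[of c e] e cV disj by auto
    have "e \<noteq> b" using e False sym by auto
    have ne: "u \<noteq> b" "a \<noteq> c" "u \<noteq> a" "d \<noteq> a" "e \<noteq> u" "c \<noteq> b"
      using u a bV cV dV eV disj by auto
    define E' where "E' = (\<lambda>x y. (E x y \<and> x \<notin> {u,a} \<and> y \<notin> {u,a}) \<or> (x = b \<and> y = c) \<or> (x = c \<and> y = b))"
    have bip': "bipartite_graph (V1 - {u}) (V2 - {a}) E'"
      using bip bV cV b(1) c(1) unfolding bipartite_graph_def E'_def by auto
    have reg': "regular_graph ((V1 - {u}) \<union> (V2 - {a})) E' 2"
      unfolding regular_graph_def
    proof
      fix w assume w: "w \<in> (V1 - {u}) \<union> (V2 - {a})"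
      show "card {v. E' w v} = 2"
      proof (cases "w = b \<or> w = c")
        case True
        then show ?thesis
        proof
          assume wb: "w = b"
          have "{v. E' w v} = {d, c}" unfolding E'_def wb using d ne b(1) \<open>d \<noteq> c\<close> by auto
          then show ?thesis using \<open>d \<noteq> c\<close> by simp
        next
          assume wc: "w = c"
          have "{v. E' w v} = {e, b}" unfolding E'_def wc using e ne c(1) \<open>e \<noteq> b\<close> by auto
          then show ?thesis using \<open>e \<noteq> b\<close> by simp
        qed
      next
        case False
        have "w \<notin> {u,a}" using w u a disj by auto
        moreover have "E w v \<Longrightarrow> v \<notin> {u,a}" for v
          using False \<open>w \<notin> {u,a}\<close> b c sym by blast
        ultimately have "{v. E' w v} = {v. E w v}" unfolding E'_def using False by auto
        then show ?thesis using reg w unfolding regular_graph_def by auto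
      qed
    qed
    have lt: "card (V1 - {u}) < card V1"
      using u fin by (intro psubset_card_mono) auto
    have cb': "E' c b" unfolding E'_def by simp
    obtain r' where r': "good (V1 - {u}) (V2 - {a}) E' r'" "r' c = b"
      using less.hyps[OF lt bip' reg' _ cb'] cV c(1) by blast
    have gg: "(\<forall>x\<in>V1 - {u}. r' x \<in> V2 - {a}) \<and> (\<forall>x\<in>V2 - {a}. r' x \<in> V1 - {u}) \<and>
      (\<forall>x\<in>(V1 - {u}) \<union> (V2 - {a}). r' (r' x) = x) \<and>
      (\<forall>x\<in>(V1 - {u}) \<union> (V2 - {a}). \<forall>y\<in>(V1 - {u}) \<union> (V2 - {a}). E' x y \<longleftrightarrow> E' (r' x) (r' y))"
      using r'(1) unfolding good_def by (elim conjE) (intro conjI)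
    note g1 = gg[THEN conjunct1] and g2 = gg[THEN conjunct2, THEN conjunct1]
      and g3 = gg[THEN conjunct2, THEN conjunct2, THEN conjunct1]
    define S where "S = {u,a}"
    have out: "r' x \<in> V1 \<union> V2 \<and> r' x \<notin> S \<and> r' (r' x) = x" if "x \<in> V1 \<union> V2" "x \<notin> S" for x
    proof -
      have "x \<in> V1 - {u} \<or> x \<in> V2 - {a}" using that unfolding S_def by auto
      then show ?thesis
      proof
        assume h: "x \<in> V1 - {u}"
        then have "r' x \<in> V2 - {a}" "r' (r' x) = x" using g1 g3 by auto
        then show ?thesis using disj u unfolding S_def by auto
      next
        assume h: "x \<in> V2 - {a}"
        then have "r' x \<in> V1 - {u}" "r' (r' x) = x" using g2 g3 by auto
        then show ?thesis using disj a unfolding S_def by auto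
      qed
    qed
    have side: "(x \<in> V1 \<longrightarrow> r' x \<in> V2) \<and> (x \<in> V2 \<longrightarrow> r' x \<in> V1)" if "x \<in> V1 \<union> V2" "x \<notin> S" for x
      using g1 g2 that unfolding S_def by auto
    have bS: "b \<notin> S" and cS: "c \<notin> S" using ne b(1) c(1) unfolding S_def by auto
    have rb: "r' b = c" using out[of c] cV cS r'(2) by auto
    have rc_iff: "r' y = c \<longleftrightarrow> y = b" if "y \<in> V1 \<union> V2" "y \<notin> S" for y
      using out[OF that] rb r'(2) by metis
    have rb_iff: "r' y = b \<longleftrightarrow> y = c" if "y \<in> V1 \<union> V2" "y \<notin> S" for y
      using out[OF that] rb r'(2) by metis
    define r where "r = r'(u:=a, a:=u)"
    have rr: "r x = r' x" if "x \<notin> S" for x using that unfolding r_def S_def by auto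
    have vals: "r u = a" "r a = u" using ne unfolding r_def by auto
    have "good V1 V2 E r"
      unfolding good_def
    proof (intro conjI ballI)
      fix x assume x: "x \<in> V1" then show "r x \<in> V2"
        using side[of x] rr[of x] vals a disj by (cases "x \<in> S") (auto simp: S_def)
    next
      fix x assume "x \<in> V2" then show "r x \<in> V1"
        using side[of x] rr[of x] vals u disj by (cases "x \<in> S") (auto simp: S_def)
    next
      fix x assume "x \<in> V1 \<union> V2" then show "r (r x) = x"
        using out[of x] rr vals by (cases "x \<in> S") (auto simp: S_def)
    next
      fix x y assume x: "x \<in> V1 \<union> V2" and y: "y \<in> V1 \<union> V2"
      have EuS: "E u v \<longleftrightarrow> v = b" "E v u \<longleftrightarrow> v = b" "E a v \<longleftrightarrow> v = c" "E v a \<longleftrightarrow> v = c"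
        if "v \<notin> S" for v
        using that b c sym unfolding S_def by blast+
      show "E x y \<longleftrightarrow> E (r x) (r y)"
      proof (cases "x \<in> S"; cases "y \<in> S")
        assume "x \<in> S" "y \<in> S"
        then have "x = u \<or> x = a" "y = u \<or> y = a" unfolding S_def by auto
        then show ?thesis
          by (elim disjE) (simp_all only: vals b(2) c(2) ne simp_thms, use ne b(1) c(1) in auto)
      next
        assume xs: "x \<in> S" and ys: "y \<notin> S"
        have ry: "r y = r' y" "r' y \<notin> S" using rr[OF ys] out[OF y ys] by auto
        from xs have "x = u \<or> x = a" unfolding S_def by auto
        then show ?thesis
        proof
          assume "x = u" then show ?thesis
            using EuS(1)[OF ys] EuS(3)[OF ry(2)] vals(1) ry(1) rc_iff[OF y ys] by simp
        next
          assume "x = a" then show ?thesis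
            using EuS(3)[OF ys] EuS(1)[OF ry(2)] vals(2) ry(1) rb_iff[OF y ys] by simp
        qed
      next
        assume xs: "x \<notin> S" and ys: "y \<in> S"
        have rx: "r x = r' x" "r' x \<notin> S" using rr[OF xs] out[OF x xs] by auto
        from ys have "y = u \<or> y = a" unfolding S_def by auto
        then show ?thesis
          using EuS[OF xs] EuS[OF rx(2)] vals rx rc_iff[OF x xs] rb_iff[OF x xs] by auto
      next
        assume xs: "x \<notin> S" and ys: "y \<notin> S"
        have x': "x \<in> (V1 - {u}) \<union> (V2 - {a})" and y': "y \<in> (V1 - {u}) \<union> (V2 - {a})"
          using x y xs ys unfolding S_def by auto
        have "E' x y \<longleftrightarrow> E' (r' x) (r' y)" using gg[THEN conjunct2, THEN conjunct2, THEN conjunct2] x' y' by blast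
        moreover have "\<not> E b c" "\<not> E c b" using False sym by auto
        ultimately show ?thesis
          using out[OF x xs] out[OF y ys] xs ys rr rc_iff[OF x xs] rb_iff[OF x xs]
            rc_iff[OF y ys] rb_iff[OF y ys] unfolding E'_def S_def by auto
      qed
    qed
    moreover have "r u = a" by (rule vals(1))
    ultimately show ?thesis by blast
  qed
qed


theorem lemma4:
  fixes V1 V2 :: "'a set" and E :: "'a \<Rightarrow> 'a \<Rightarrow> bool"
  assumes "bipartite_graph V1 V2 E"
    and "regular_graph (V1 \<union> V2) E 2"
  shows "mirror V1 V2 E"
proof -
  obtain r where r: "good V1 V2 E r"
    using exists_good[OF main[OF assms] assms] by blast
  have s1: "\<forall>x\<in>V1. r x \<in> V2" using r by (simp add: good_def)
  have s2: "\<forall>x\<in>V2. r x \<in> V1" using r by (simp add: good_def)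
  have inv: "\<forall>x\<in>V1\<union>V2. r (r x) = x" using r by (simp add: good_def)
  have ed: "\<forall>x\<in>V1\<union>V2. \<forall>y\<in>V1\<union>V2. E x y \<longleftrightarrow> E (r x) (r y)" using r by (simp add: good_def)
  have inj: "inj_on r V1"
  proof (rule inj_onI)
    fix x y assume "x \<in> V1" "y \<in> V1" "r x = r y"
    then show "x = y" using inv by (metis UnI1)
  qed
  have img: "r ` V1 = V2"
  proof
    show "r ` V1 \<subseteq> V2" using s1 by blast
    show "V2 \<subseteq> r ` V1"
    proof
      fix y assume y: "y \<in> V2"
      then have "r (r y) = y" using inv by blast
      moreover have "r y \<in> V1" using s2 y by blast
      ultimately show "y \<in> r ` V1" by (metis imageI)
    qed
  qed
  have "bij_betw r V1 V2" using inj img by (simp add: bij_betw_def)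
  moreover have "\<forall>u\<in>V1. \<forall>v\<in>V1. E u (r v) \<longleftrightarrow> E (r u) v"
  proof (intro ballI)
    fix u v assume u: "u \<in> V1" and v: "v \<in> V1"
    have rv: "r v \<in> V1 \<union> V2" using s1 v by blast
    have uu: "u \<in> V1 \<union> V2" using u by blast
    have "E u (r v) \<longleftrightarrow> E (r u) (r (r v))" using ed uu rv by blast
    moreover have "r (r v) = v" using inv v by blast
    ultimately show "E u (r v) \<longleftrightarrow> E (r u) v" by simp
  qed
  ultimately show ?thesis unfolding mirror_def by blast
qed

end
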